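(* Let $M$ be a $d$-dimensional simplicial complex and $N$ a $(d-1)$-dimensional induced subcomplex of $M$, and suppose both $M$ and $N$ are normal pseudomanifolds. Then (a) for any vertex $u$ of $N$ and any vertex $v$ of the simplicial complement $C(N, M)$, there is a path $P$ in the edge graph of $M$ joining $u$ to $v$ such that $u$ is the only vertex of $P$ lying in $N$; and (b) $C(N, M)$ has at most two connected components.
   Context: A simplicial complex is a finite set of finite sets closed under taking subsets; an element of size $i+1$ is an $i$-face (the empty set is the unique $(-1)$-face); $V(X)$ is the vertex set. For $A\subseteq V(M)$ the induced subcomplex $M[A]$ consists of all faces of $M$ contained in $A$; $N$ is an induced subcomplex if $N=M[V(N)]$. The simplicial complement of an induced subcomplex $N$ is $C(N,M)=M[V(M)\setminus V(N)]$. A pure $d$-dimensional complex has all maximal faces (facets) of dimension $d$. The link of a face $\alpha$ is $\mathrm{lk}_X(\alpha)=\{\beta\in X:\beta\cap\alpha=\emptyset,\ \alpha\cup\beta\in X\}$. A complex is connected if its edge graph is connected. A $d$-dimensional normal pseudomanifold ($d\ge1$) is a pure $d$-dimensional simplicial complex in which every $(d-1)$-face lies in exactly two facets and the link of every face of dimension $\le d-2$ (including the empty face, whose link is the whole complex) is connected. *)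

theory Defs
  imports Main
begin

definition simplicial_complex :: "'a set set \<Rightarrow> bool" where
  "simplicial_complex X \<longleftrightarrow> finite X \<and> (\<forall>\<sigma>\<in>X. finite \<sigma>) \<and> (\<forall>\<sigma>\<in>X. \<forall>\<tau>. \<tau> \<subseteq> \<sigma> \<longrightarrow> \<tau> \<in> X)"

definition vertices :: "'a set set \<Rightarrow> 'a set" where
  "vertices X = \<Union>X"

definition induced :: "'a set set \<Rightarrow> 'a set \<Rightarrow> 'a set set" where
  "induced M A = {\<sigma> \<in> M. \<sigma> \<subseteq> A}"

definition induced_subcomplex :: "'a set set \<Rightarrow> 'a set set \<Rightarrow> bool" where
  "induced_subcomplex N M \<longleftrightarrow> N = induced M (vertices N)"

definition simp_complement :: "'a set set \<Rightarrow> 'a set set \<Rightarrow> 'a set set" where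
  "simp_complement N M = induced M (vertices M - vertices N)"

definition link :: "'a set set \<Rightarrow> 'a set \<Rightarrow> 'a set set" where
  "link X \<alpha> = {\<beta> \<in> X. \<beta> \<inter> \<alpha> = {} \<and> \<alpha> \<union> \<beta> \<in> X}"

definition facets :: "'a set set \<Rightarrow> 'a set set" where
  "facets X = {\<sigma> \<in> X. \<forall>\<tau>\<in>X. \<sigma> \<subseteq> \<tau> \<longrightarrow> \<tau> = \<sigma>}"

definition pure_dim :: "'a set set \<Rightarrow> nat \<Rightarrow> bool" where
  "pure_dim X d \<longleftrightarrow> (\<exists>\<sigma>\<in>X. card \<sigma> = d + 1) \<and> (\<forall>\<sigma>\<in>facets X. card \<sigma> = d + 1)"

definition adj :: "'a set set \<Rightarrow> 'a \<Rightarrow> 'a \<Rightarrow> bool" where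
  "adj X u v \<longleftrightarrow> u \<noteq> v \<and> {u, v} \<in> X"

definition connected_cx :: "'a set set \<Rightarrow> bool" where
  "connected_cx X \<longleftrightarrow> (\<forall>u\<in>vertices X. \<forall>v\<in>vertices X. (adj X)\<^sup>*\<^sup>* u v)"

definition components :: "'a set set \<Rightarrow> 'a set set" where
  "components X = (\<lambda>v. {w \<in> vertices X. (adj X)\<^sup>*\<^sup>* v w}) ` vertices X"

text \<open>d-dimensional normal pseudomanifold (d \<ge> 1). Faces of dimension \<le> d-2 are those of card \<le> d-1.\<close>
definition normal_pseudomanifold :: "'a set set \<Rightarrow> nat \<Rightarrow> bool" where
  "normal_pseudomanifold X d \<longleftrightarrow> d \<ge> 1 \<and> simplicial_complex X \<and> pure_dim X d \<and>
     (\<forall>\<sigma>\<in>X. card \<sigma> = d \<longrightarrow> card {\<tau> \<in> X. card \<tau> = d + 1 \<and> \<sigma> \<subseteq> \<tau>} = 2) \<and>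
     (\<forall>\<sigma>\<in>X. card \<sigma> \<le> d - 1 \<longrightarrow> connected_cx (link X \<sigma>))"

definition edge_path :: "'a set set \<Rightarrow> 'a list \<Rightarrow> 'a \<Rightarrow> 'a \<Rightarrow> bool" where
  "edge_path X p u v \<longleftrightarrow> p \<noteq> [] \<and> hd p = u \<and> last p = v \<and> distinct p \<and>
     set p \<subseteq> vertices X \<and> (\<forall>i. Suc i < length p \<longrightarrow> adj X (p ! i) (p ! Suc i))"

end

theory Submission
  imports Defs
begin

lemma sc_sub: "simplicial_complex X \<Longrightarrow> \<sigma> \<in> X \<Longrightarrow> \<tau> \<subseteq> \<sigma> \<Longrightarrow> \<tau> \<in> X"
  by (auto simp: simplicial_complex_def)
lemma sc_face_finite: "simplicial_complex X \<Longrightarrow> \<sigma> \<in> X \<Longrightarrow> finite \<sigma>"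
  by (auto simp: simplicial_complex_def)
lemma finite_vertices: "simplicial_complex X \<Longrightarrow> finite (vertices X)"
  unfolding vertices_def simplicial_complex_def by auto
lemma vertex_singleton: "simplicial_complex X \<Longrightarrow> x \<in> vertices X \<Longrightarrow> {x} \<in> X"
  unfolding vertices_def simplicial_complex_def by auto
lemma singleton_vertex: "{x} \<in> X \<Longrightarrow> x \<in> vertices X"
  unfolding vertices_def by auto
lemma face_vertices: "\<sigma> \<in> X \<Longrightarrow> \<sigma> \<subseteq> vertices X"
  unfolding vertices_def by auto
lemma adj_sym: "adj X x y = adj X y x"
  unfolding adj_def by (auto simp: insert_commute)
lemma adj_symI: "adj X x y \<Longrightarrow> adj X y x"
  using adj_sym[of X x y] by simp
lemma adj_vertices: "adj X x y \<Longrightarrow> x \<in> vertices X \<and> y \<in> vertices X"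
  unfolding adj_def vertices_def by auto
lemma rtranclp_adj_sym: "(adj X)\<^sup>*\<^sup>* x y \<Longrightarrow> (adj X)\<^sup>*\<^sup>* y x"
proof (induction rule: rtranclp_induct)
  case base then show ?case by simp
next
  case (step y z) then show ?case
    by (meson adj_symI converse_rtranclp_into_rtranclp)
qed

lemma induced_sub: "induced_subcomplex N M \<Longrightarrow> N \<subseteq> M"
  unfolding induced_subcomplex_def induced_def by auto
lemma vert_N_sub: "induced_subcomplex N M \<Longrightarrow> vertices N \<subseteq> vertices M"
  using induced_sub unfolding vertices_def by blast
lemma induced_mem: "induced_subcomplex N M \<Longrightarrow> \<sigma> \<in> M \<Longrightarrow> \<sigma> \<subseteq> vertices N \<Longrightarrow> \<sigma> \<in> N"
  unfolding induced_subcomplex_def induced_def by blast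
lemma vert_C: assumes sc: "simplicial_complex M" shows "vertices (simp_complement N M) = vertices M - vertices N"
proof (rule equalityI)
  show "vertices (simp_complement N M) \<subseteq> vertices M - vertices N"
  proof
    fix x assume "x \<in> vertices (simp_complement N M)"
    then obtain \<sigma> where s: "\<sigma> \<in> simp_complement N M" "x \<in> \<sigma>" unfolding vertices_def by blast
    then have "\<sigma> \<subseteq> vertices M - vertices N" unfolding simp_complement_def induced_def by simp
    then show "x \<in> vertices M - vertices N" using s(2) by blast
  qed
  show "vertices M - vertices N \<subseteq> vertices (simp_complement N M)"
  proof
    fix x assume x: "x \<in> vertices M - vertices N"
    have xM: "{x} \<in> M" using vertex_singleton[OF sc] x by blast
    have "{x} \<subseteq> vertices M - vertices N" using x by simp
    then have "{x} \<in> simp_complement N M" using xM unfolding simp_complement_def induced_def by simp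
    then show "x \<in> vertices (simp_complement N M)" by (rule singleton_vertex)
  qed
qed
lemma adj_C: "adj (simp_complement N M) x y \<longleftrightarrow> adj M x y \<and> x \<notin> vertices N \<and> y \<notin> vertices N"
proof -
  have "adj (simp_complement N M) x y \<longleftrightarrow> x \<noteq> y \<and> {x,y} \<in> M \<and> {x,y} \<subseteq> vertices M - vertices N"
    unfolding simp_complement_def induced_def adj_def by simp
  also have "\<dots> \<longleftrightarrow> adj M x y \<and> x \<notin> vertices N \<and> y \<notin> vertices N"
    unfolding adj_def using face_vertices by blast
  finally show ?thesis .
qed

lemma face_in_facet: assumes "simplicial_complex X" "\<sigma> \<in> X" shows "\<exists>F\<in>facets X. \<sigma> \<subseteq> F"
proof -
  have fin: "finite {\<tau>\<in>X. \<sigma> \<subseteq> \<tau>}" using assms by (simp add: simplicial_complex_def)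
  have ne: "{\<tau>\<in>X. \<sigma> \<subseteq> \<tau>} \<noteq> {}" using assms by auto
  obtain F where F: "F \<in> {\<tau>\<in>X. \<sigma> \<subseteq> \<tau>}" "\<forall>b\<in>{\<tau>\<in>X. \<sigma> \<subseteq> \<tau>}. F \<le> b \<longrightarrow> F = b"
    using finite_has_maximal[OF fin ne] by blast
  then show ?thesis unfolding facets_def by force
qed

lemma face_card_le: assumes "simplicial_complex X" "pure_dim X d" "\<sigma> \<in> X" shows "card \<sigma> \<le> d + 1"
proof -
  obtain F where F: "F \<in> facets X" "\<sigma> \<subseteq> F" using face_in_facet assms by blast
  have "card F = d + 1" using F(1) assms(2) unfolding pure_dim_def by blast
  moreover have "finite F" using F(1) assms(1) sc_face_finite unfolding facets_def by blast
  ultimately have "card F = d + 1" "finite F" by auto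
  then show ?thesis using F card_mono by fastforce
qed

lemma link_empty: "link X {} = X" unfolding link_def by auto

lemma npm_sc: "normal_pseudomanifold X d \<Longrightarrow> simplicial_complex X"
  unfolding normal_pseudomanifold_def by blast
lemma npm_pure: "normal_pseudomanifold X d \<Longrightarrow> pure_dim X d"
  unfolding normal_pseudomanifold_def by blast
lemma npm_d: "normal_pseudomanifold X d \<Longrightarrow> d \<ge> 1"
  unfolding normal_pseudomanifold_def by blast
lemma npm_ridge: "normal_pseudomanifold X d \<Longrightarrow> \<sigma> \<in> X \<Longrightarrow> card \<sigma> = d \<Longrightarrow> card {\<tau> \<in> X. card \<tau> = d + 1 \<and> \<sigma> \<subseteq> \<tau>} = 2"
  unfolding normal_pseudomanifold_def by blast
lemma npm_conn: "normal_pseudomanifold X d \<Longrightarrow> \<sigma> \<in> X \<Longrightarrow> card \<sigma> \<le> d - 1 \<Longrightarrow> connected_cx (link X \<sigma>)"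
  unfolding normal_pseudomanifold_def by blast

lemma npm_connected: assumes "normal_pseudomanifold X d" shows "connected_cx X"
proof -
  obtain \<sigma> where "\<sigma> \<in> X" using assms unfolding normal_pseudomanifold_def pure_dim_def by blast
  then have "{} \<in> X" using sc_sub[OF npm_sc[OF assms]] by blast
  then have "connected_cx (link X {})" using npm_conn[OF assms] by simp
  then show ?thesis by (simp add: link_empty)
qed

lemma npm_vertex_ex: assumes "normal_pseudomanifold X d" shows "\<exists>x. x \<in> vertices X"
proof -
  obtain \<sigma> where "\<sigma> \<in> X" "card \<sigma> = d + 1" using assms unfolding normal_pseudomanifold_def pure_dim_def by blast
  then have "\<sigma> \<noteq> {}" by auto
  then show ?thesis using \<open>\<sigma> \<in> X\<close> face_vertices by blast
qed

lemma npm1_degree: assumes "normal_pseudomanifold X 1" "w \<in> vertices X"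
  shows "card {z. adj X w z} = 2"
proof -
  have sc: "simplicial_complex X" using npm_sc[OF assms(1)] .
  have w: "{w} \<in> X" using vertex_singleton[OF sc assms(2)] .
  have c1: "card {w} = 1" by simp
  have c: "card {\<tau> \<in> X. card \<tau> = 1 + 1 \<and> {w} \<subseteq> \<tau>} = 2" by (rule npm_ridge[OF assms(1) w c1])
  have e: "{\<tau> \<in> X. card \<tau> = 1 + 1 \<and> {w} \<subseteq> \<tau>} = (\<lambda>z. {w,z}) ` {z. adj X w z}"
  proof
    show "{\<tau> \<in> X. card \<tau> = 1 + 1 \<and> {w} \<subseteq> \<tau>} \<subseteq> (\<lambda>z. {w,z}) ` {z. adj X w z}"
    proof
      fix \<tau> assume t: "\<tau> \<in> {\<tau> \<in> X. card \<tau> = 1 + 1 \<and> {w} \<subseteq> \<tau>}"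
      have tc: "card \<tau> = 2" "\<tau> \<in> X" "w \<in> \<tau>" using t by auto
      from tc(1) obtain x y where xy: "\<tau> = {x,y}" "x \<noteq> y" unfolding card_2_iff by blast
      show "\<tau> \<in> (\<lambda>z. {w,z}) ` {z. adj X w z}"
      proof (cases "w = x")
        case True
        then have "adj X w y" "\<tau> = {w,y}" using xy tc unfolding adj_def by auto
        then show ?thesis by blast
      next
        case False
        then have "w = y" using xy tc by auto
        then have "\<tau> = {w,x}" using xy by blast
        then have "adj X w x" "\<tau> = {w,x}" using xy tc unfolding adj_def by auto
        then show ?thesis by blast
      qed
    qed
    show "(\<lambda>z. {w,z}) ` {z. adj X w z} \<subseteq> {\<tau> \<in> X. card \<tau> = 1 + 1 \<and> {w} \<subseteq> \<tau>}"
      unfolding adj_def by auto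
  qed
  have inj: "inj_on (\<lambda>z. {w,z}) {z. adj X w z}" unfolding inj_on_def adj_def by (auto simp: doubleton_eq_iff)
  show ?thesis using card_image[OF inj] c e by simp
qed

lemma finite_nbrs: "simplicial_complex X \<Longrightarrow> finite {z. adj X w z}"
proof -
  assume sc: "simplicial_complex X"
  have "{z. adj X w z} \<subseteq> vertices X"
  proof
    fix z assume "z \<in> {z. adj X w z}"
    then show "z \<in> vertices X" using adj_vertices[of X w z] by simp
  qed
  then show ?thesis using finite_vertices[OF sc] finite_subset by blast
qed


lemma link_mem: "\<beta> \<in> link X {p} \<longleftrightarrow> \<beta> \<in> X \<and> p \<notin> \<beta> \<and> insert p \<beta> \<in> X"
  unfolding link_def by auto

lemma link_sub: "link X \<alpha> \<subseteq> X" unfolding link_def by auto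

lemma sc_link: assumes "simplicial_complex X" shows "simplicial_complex (link X {p})"
proof -
  have "finite (link X {p})" using assms link_sub finite_subset unfolding simplicial_complex_def by metis
  moreover have "\<forall>\<sigma>\<in>link X {p}. finite \<sigma>" using assms link_sub unfolding simplicial_complex_def by blast
  moreover have "\<forall>\<sigma>\<in>link X {p}. \<forall>\<tau>. \<tau> \<subseteq> \<sigma> \<longrightarrow> \<tau> \<in> link X {p}"
  proof (intro ballI allI impI)
    fix \<sigma> \<tau> assume s: "\<sigma> \<in> link X {p}" and t: "\<tau> \<subseteq> \<sigma>"
    then have "\<sigma> \<in> X" "p \<notin> \<sigma>" "insert p \<sigma> \<in> X" by (auto simp: link_mem)
    moreover have "insert p \<tau> \<subseteq> insert p \<sigma>" using t by auto
    ultimately show "\<tau> \<in> link X {p}" using t sc_sub[OF assms] by (auto simp: link_mem)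
  qed
  ultimately show ?thesis unfolding simplicial_complex_def by blast
qed

lemma link_link: assumes "simplicial_complex X" "\<sigma> \<in> link X {p}"
  shows "link (link X {p}) \<sigma> = link X (insert p \<sigma>)"
proof -
  have ps: "p \<notin> \<sigma>" "\<sigma> \<in> X" using assms(2) by (auto simp: link_mem)
  show ?thesis
  proof
    show "link (link X {p}) \<sigma> \<subseteq> link X (insert p \<sigma>)"
    proof
      fix \<beta> assume "\<beta> \<in> link (link X {p}) \<sigma>"
      then have "\<beta> \<in> X" "p \<notin> \<beta>" "\<beta> \<inter> \<sigma> = {}" "insert p (\<sigma> \<union> \<beta>) \<in> X"
        unfolding link_def by auto
      then show "\<beta> \<in> link X (insert p \<sigma>)" unfolding link_def by auto
    qed
    show "link X (insert p \<sigma>) \<subseteq> link (link X {p}) \<sigma>"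
    proof
      fix \<beta> assume b: "\<beta> \<in> link X (insert p \<sigma>)"
      then have b1: "\<beta> \<in> X" "p \<notin> \<beta>" "\<beta> \<inter> \<sigma> = {}" "insert p (\<sigma> \<union> \<beta>) \<in> X"
        unfolding link_def by auto
      have "insert p \<beta> \<in> X" using sc_sub[OF assms(1) b1(4)] by blast
      moreover have "\<sigma> \<union> \<beta> \<in> X" using sc_sub[OF assms(1) b1(4)] by blast
      ultimately show "\<beta> \<in> link (link X {p}) \<sigma>" using b1 ps unfolding link_def by auto
    qed
  qed
qed

lemma link_npm: assumes npm: "normal_pseudomanifold X d" and d2: "d \<ge> 2" and p: "{p} \<in> X"
  shows "normal_pseudomanifold (link X {p}) (d - 1)"
proof -
  have sc: "simplicial_complex X" using npm by (rule npm_sc)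
  have pd: "pure_dim X d" using npm by (rule npm_pure)
  let ?L = "link X {p}"
  have scL: "simplicial_complex ?L" using sc by (rule sc_link)
  have ex: "\<exists>\<sigma>\<in>?L. card \<sigma> = d - 1 + 1"
  proof -
    obtain F where F: "F \<in> facets X" "{p} \<subseteq> F" using face_in_facet[OF sc p] by blast
    have FX: "F \<in> X" using F(1) unfolding facets_def by blast
    have Fc: "card F = d + 1" "F \<in> X" "finite F" using F(1) pd unfolding pure_dim_def apply blast
      using FX sc sc_face_finite by blast+
    have "F - {p} \<in> ?L" using F Fc sc_sub[OF sc] by (auto simp: link_mem insert_absorb)
    moreover have "card (F - {p}) = d - 1 + 1" using Fc F d2 by auto
    ultimately show ?thesis by blast
  qed
  have fac: "\<forall>\<sigma>\<in>facets ?L. card \<sigma> = d - 1 + 1"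
  proof
    fix \<tau> assume t: "\<tau> \<in> facets ?L"
    then have tL: "\<tau> \<in> X" "p \<notin> \<tau>" "insert p \<tau> \<in> X" unfolding facets_def by (auto simp: link_mem)
    have "insert p \<tau> \<in> facets X"
      unfolding facets_def
    proof (intro CollectI conjI ballI impI)
      show "insert p \<tau> \<in> X" by fact
      fix G assume G: "G \<in> X" "insert p \<tau> \<subseteq> G"
      then have "G - {p} \<in> ?L" using sc_sub[OF sc G(1)] by (auto simp: link_mem insert_absorb)
      moreover have "\<tau> \<subseteq> G - {p}" using G tL by auto
      ultimately have "G - {p} = \<tau>" using t unfolding facets_def by blast
      then show "G = insert p \<tau>" using G by auto
    qed
    then have "card (insert p \<tau>) = d + 1" using pd unfolding pure_dim_def by blast
    moreover have "finite \<tau>" using tL sc sc_face_finite by blast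
    ultimately show "card \<tau> = d - 1 + 1" using tL d2 by simp
  qed
  have ridge: "\<forall>\<rho>\<in>?L. card \<rho> = d - 1 \<longrightarrow> card {\<tau> \<in> ?L. card \<tau> = d - 1 + 1 \<and> \<rho> \<subseteq> \<tau>} = 2"
  proof (intro ballI impI)
    fix \<rho> assume r: "\<rho> \<in> ?L" "card \<rho> = d - 1"
    then have rL: "\<rho> \<in> X" "p \<notin> \<rho>" "insert p \<rho> \<in> X" by (auto simp: link_mem)
    have fr: "finite \<rho>" using rL sc sc_face_finite by blast
    have cr: "card (insert p \<rho>) = d" using fr rL r d2 by simp
    have c2: "card {T \<in> X. card T = d + 1 \<and> insert p \<rho> \<subseteq> T} = 2" by (rule npm_ridge[OF npm rL(3) cr])
    let ?SL = "{\<tau> \<in> ?L. card \<tau> = d - 1 + 1 \<and> \<rho> \<subseteq> \<tau>}"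
    have eq: "{T \<in> X. card T = d + 1 \<and> insert p \<rho> \<subseteq> T} = insert p ` ?SL"
    proof
      show "{T \<in> X. card T = d + 1 \<and> insert p \<rho> \<subseteq> T} \<subseteq> insert p ` ?SL"
      proof
        fix T assume T: "T \<in> {T \<in> X. card T = d + 1 \<and> insert p \<rho> \<subseteq> T}"
        then have T1: "T \<in> X" "card T = d + 1" "insert p \<rho> \<subseteq> T" by auto
        have fT: "finite T" using T1 sc sc_face_finite by blast
        have "T - {p} \<in> ?L" using T1 sc_sub[OF sc T1(1)] by (auto simp: link_mem insert_absorb)
        moreover have "card (T - {p}) = d - 1 + 1" using T1 fT d2 by auto
        moreover have "\<rho> \<subseteq> T - {p}" using T1 rL by auto
        moreover have "T = insert p (T - {p})" using T1 by auto
        ultimately show "T \<in> insert p ` ?SL" by blast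
      qed
      show "insert p ` ?SL \<subseteq> {T \<in> X. card T = d + 1 \<and> insert p \<rho> \<subseteq> T}"
      proof
        fix T assume "T \<in> insert p ` ?SL"
        then obtain \<tau> where t: "\<tau> \<in> ?L" "card \<tau> = d - 1 + 1" "\<rho> \<subseteq> \<tau>" "T = insert p \<tau>" by blast
        then have tL: "\<tau> \<in> X" "p \<notin> \<tau>" "insert p \<tau> \<in> X" by (auto simp: link_mem)
        have "finite \<tau>" using tL sc sc_face_finite by blast
        then show "T \<in> {T \<in> X. card T = d + 1 \<and> insert p \<rho> \<subseteq> T}" using t tL d2 by auto
      qed
    qed
    have inj: "inj_on (insert p) ?SL"
    proof (rule inj_onI)
      fix x y assume "x \<in> ?SL" "y \<in> ?SL" "insert p x = insert p y"
      then show "x = y" by (metis (no_types, lifting) insert_ident link_mem mem_Collect_eq)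
    qed
    show "card ?SL = 2" using c2 eq card_image[OF inj] by simp
  qed
  have conn: "\<forall>\<sigma>\<in>?L. card \<sigma> \<le> d - 1 - 1 \<longrightarrow> connected_cx (link ?L \<sigma>)"
  proof (intro ballI impI)
    fix \<sigma> assume s: "\<sigma> \<in> ?L" "card \<sigma> \<le> d - 1 - 1"
    then have sL: "\<sigma> \<in> X" "p \<notin> \<sigma>" "insert p \<sigma> \<in> X" by (auto simp: link_mem)
    have "finite \<sigma>" using sL sc sc_face_finite by blast
    then have "card (insert p \<sigma>) \<le> d - 1" using s sL d2 by simp
    then have "connected_cx (link X (insert p \<sigma>))" by (rule npm_conn[OF npm sL(3)])
    then show "connected_cx (link ?L \<sigma>)" using link_link[OF sc s(1)] by simp
  qed
  have "d - 1 \<ge> 1" using d2 by simp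
  then show ?thesis unfolding normal_pseudomanifold_def pure_dim_def using scL ex fac ridge conn by blast
qed


lemma link_npm1: assumes npm: "normal_pseudomanifold X 1" and p: "{p} \<in> X"
  shows "\<exists>a b. a \<noteq> b \<and> link X {p} = {{}, {a}, {b}}"
proof -
  have sc: "simplicial_complex X" using npm by (rule npm_sc)
  have pd: "pure_dim X 1" using npm by (rule npm_pure)
  have "card {z. adj X p z} = 2" using npm1_degree[OF npm] singleton_vertex[OF p] by blast
  then obtain a b where ab: "{z. adj X p z} = {a, b}" "a \<noteq> b" unfolding card_2_iff by blast
  have aa: "adj X p a" "adj X p b" using ab(1) by blast+
  show ?thesis
  proof (intro exI conjI)
    show "a \<noteq> b" by fact
    show "link X {p} = {{}, {a}, {b}}"
    proof (rule equalityI)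
      show "link X {p} \<subseteq> {{}, {a}, {b}}"
      proof
        fix \<beta> assume b: "\<beta> \<in> link X {p}"
        then have bL: "\<beta> \<in> X" "p \<notin> \<beta>" "insert p \<beta> \<in> X" by (auto simp: link_mem)
        have fb: "finite \<beta>" using bL sc sc_face_finite by blast
        have "card (insert p \<beta>) \<le> 2" using face_card_le[OF sc pd bL(3)] by simp
        then have cb: "card \<beta> \<le> 1" using fb bL by simp
        show "\<beta> \<in> {{}, {a}, {b}}"
        proof (cases "\<beta> = {}")
          case True then show ?thesis by simp
        next
          case False
          then obtain z where z: "\<beta> = {z}" using cb fb
            by (metis One_nat_def card_0_eq card_eq_SucD le_antisym less_one not_le)
          then have "adj X p z" using bL unfolding adj_def by auto
          then have "z = a \<or> z = b" using ab(1) by blast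
          then show ?thesis using z by auto
        qed
      qed
      show "{{}, {a}, {b}} \<subseteq> link X {p}"
        using aa sc_sub[OF sc] unfolding adj_def by (auto simp: link_mem)
    qed
  qed
qed

lemma link_induced: assumes sc: "simplicial_complex M" and ind: "induced_subcomplex N M" and p: "{p} \<in> N"
  shows "induced_subcomplex (link N {p}) (link M {p})"
  unfolding induced_subcomplex_def
proof (rule equalityI)
  have NM: "N \<subseteq> M" using ind by (rule induced_sub)
  show "link N {p} \<subseteq> induced (link M {p}) (vertices (link N {p}))"
  proof
    fix \<beta> assume b: "\<beta> \<in> link N {p}"
    then have bN: "\<beta> \<in> N" "p \<notin> \<beta>" "insert p \<beta> \<in> N" unfolding link_mem by blast+
    have "\<beta> \<in> link M {p}" unfolding link_mem using bN NM by blast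
    moreover have "\<beta> \<subseteq> vertices (link N {p})" using face_vertices[OF b] .
    ultimately show "\<beta> \<in> induced (link M {p}) (vertices (link N {p}))" unfolding induced_def by blast
  qed
  show "induced (link M {p}) (vertices (link N {p})) \<subseteq> link N {p}"
  proof
    fix \<beta> assume b: "\<beta> \<in> induced (link M {p}) (vertices (link N {p}))"
    then have bL: "\<beta> \<in> M" "p \<notin> \<beta>" "insert p \<beta> \<in> M" "\<beta> \<subseteq> vertices (link N {p})"
      unfolding induced_def by (auto simp: link_mem)
    have "vertices (link N {p}) \<subseteq> vertices N" using link_sub unfolding vertices_def by blast
    then have bv: "\<beta> \<subseteq> vertices N" using bL by blast
    have pv: "p \<in> vertices N" using singleton_vertex[OF p] .
    have "\<beta> \<in> N" using induced_mem[OF ind bL(1) bv] .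
    moreover have "insert p \<beta> \<in> N" using induced_mem[OF ind bL(3)] bv pv by blast
    ultimately show "\<beta> \<in> link N {p}" using bL by (auto simp: link_mem)
  qed
qed

lemma link_vert_out: assumes sc: "simplicial_complex M" and ind: "induced_subcomplex N M" and p: "{p} \<in> N"
  and x: "x \<in> vertices (link M {p}) - vertices (link N {p})"
  shows "x \<in> vertices M - vertices N"
proof -
  obtain \<beta> where b: "\<beta> \<in> link M {p}" "x \<in> \<beta>" using x unfolding vertices_def by blast
  then have bL: "\<beta> \<in> M" "p \<notin> \<beta>" "insert p \<beta> \<in> M" by (auto simp: link_mem)
  have sub1: "{p, x} \<subseteq> insert p \<beta>" using b by auto
  have px: "{p, x} \<in> M" by (rule sc_sub[OF sc bL(3) sub1])
  have xM: "x \<in> vertices M" using face_vertices[OF bL(1)] b(2) by blast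
  have "x \<notin> vertices N"
  proof
    assume xN: "x \<in> vertices N"
    have pv: "p \<in> vertices N" by (rule singleton_vertex[OF p])
    have sub2: "{p, x} \<subseteq> vertices N" using xN pv by simp
    have pxN: "{p, x} \<in> N" by (rule induced_mem[OF ind px sub2])
    have sub3: "{x} \<subseteq> {p, x}" by auto
    have x1: "{x} \<in> M" by (rule sc_sub[OF sc px sub3])
    have sub4: "{x} \<subseteq> vertices N" using xN by simp
    have xN1: "{x} \<in> N" by (rule induced_mem[OF ind x1 sub4])
    have "p \<noteq> x" using b(2) bL(2) by auto
    then have "{x} \<in> link N {p}" unfolding link_mem using pxN xN1 by auto
    then have "x \<in> vertices (link N {p})" by (rule singleton_vertex)
    then show False using x by blast
  qed
  then show ?thesis using xM by blast
qed

lemma link_adj: "adj (link X \<alpha>) x y \<Longrightarrow> adj X x y"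
  unfolding adj_def using link_sub by blast

lemma link_vertex_of_adj: assumes sc: "simplicial_complex X" "adj X p c" shows "c \<in> vertices (link X {p})"
proof -
  have "{c} \<in> link X {p}" using assms sc_sub[OF sc(1)] unfolding adj_def by (auto simp: link_mem)
  then show ?thesis by (rule singleton_vertex)
qed


lemma even_sym_card: "finite P \<Longrightarrow> (\<forall>x y. (x,y) \<in> P \<longrightarrow> (y,x) \<in> P \<and> x \<noteq> y) \<Longrightarrow> even (card P)"
proof (induction "card P" arbitrary: P rule: less_induct)
  case less
  show ?case
  proof (cases "P = {}")
    case True then show ?thesis by simp
  next
    case False
    then obtain x y where xy: "(x,y) \<in> P" by auto
    then have yx: "(y,x) \<in> P" "x \<noteq> y" using less.prems by auto
    let ?P' = "P - {(x,y),(y,x)}"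
    have c: "card ?P' = card P - 2" using xy yx less.prems(1) by (simp add: card_Diff_subset)
    have c2: "card P \<ge> 2" using xy yx less.prems(1)
      by (metis card_2_iff card_mono empty_subsetI insert_subset prod.inject)
    have "even (card ?P')"
      using less.hyps[of ?P'] less.prems c c2 by auto
    then show ?thesis using c c2 by (metis add_diff_inverse_nat dvd_add_left_iff even_numeral not_le less_2_cases_iff
          linorder_not_less)
  qed
qed

lemma rtranclp_symp: assumes "\<And>x y. R x y \<Longrightarrow> R y x" shows "R\<^sup>*\<^sup>* x y \<Longrightarrow> R\<^sup>*\<^sup>* y x"
proof (induction rule: rtranclp_induct)
  case base then show ?case by simp
next
  case (step y z) then show ?case using assms by (metis converse_rtranclp_into_rtranclp)
qed

lemma npm1_cut: assumes npm: "normal_pseudomanifold X 1" and b: "b \<in> vertices X"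
  and x: "x \<in> vertices X" "x \<noteq> b" and y: "y \<in> vertices X" "y \<noteq> b"
  shows "(\<lambda>s t. adj X s t \<and> s \<noteq> b \<and> t \<noteq> b)\<^sup>*\<^sup>* x y"
proof -
  define R where "R = (\<lambda>s t. adj X s t \<and> s \<noteq> b \<and> t \<noteq> b)"
  have Rsym: "R t s" if "R s t" for s t
  proof -
    from that have h: "adj X s t" "s \<noteq> b" "t \<noteq> b" unfolding R_def by auto
    show ?thesis unfolding R_def using adj_symI[OF h(1)] h(2,3) by simp
  qed
  have RI: "\<And>s t. adj X s t \<Longrightarrow> s \<noteq> b \<Longrightarrow> t \<noteq> b \<Longrightarrow> R s t" unfolding R_def by blast
  have RD: "\<And>s t. R s t \<Longrightarrow> adj X s t \<and> s \<noteq> b \<and> t \<noteq> b" unfolding R_def by blast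
  have sc: "simplicial_complex X" using npm by (rule npm_sc)
  have "card {z. adj X b z} = 2" using npm1_degree[OF npm b] .
  then obtain x0 y0 where ab: "{z. adj X b z} = {x0, y0}" "x0 \<noteq> y0" unfolding card_2_iff by blast
  have nb: "w = x0 \<or> w = y0" if wb: "adj X w b" for w
  proof -
    have "w \<in> {z. adj X b z}" using adj_symI[OF wb] by simp
    then show ?thesis using ab(1) by simp
  qed
  have a0: "adj X b x0" "adj X b y0" using ab(1) by blast+
  have x0b: "x0 \<noteq> b" "y0 \<noteq> b" using a0 unfolding adj_def by auto
  have conn: "connected_cx X" using npm by (rule npm_connected)
  have step1: "R\<^sup>*\<^sup>* w x0 \<or> R\<^sup>*\<^sup>* w y0" if w: "w \<in> vertices X" "w \<noteq> b" for w
  proof -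
    have "(adj X)\<^sup>*\<^sup>* w b" using conn w b unfolding connected_cx_def by blast
    then show "R\<^sup>*\<^sup>* w x0 \<or> R\<^sup>*\<^sup>* w y0" using w(2)
    proof (induction rule: converse_rtranclp_induct)
      case base then show ?case by simp
    next
      case (step u v)
      show ?case
      proof (cases "v = b")
        case True then have "u = x0 \<or> u = y0" using step.hyps(1) nb by blast
        then show ?thesis by auto
      next
        case False
        have Ruv: "R u v" using RI step.hyps(1) step.prems False by blast
        have "R\<^sup>*\<^sup>* v x0 \<or> R\<^sup>*\<^sup>* v y0" using step.IH False by blast
        then show ?thesis
        proof
          assume "R\<^sup>*\<^sup>* v x0"
          then have "R\<^sup>*\<^sup>* u x0" by (rule converse_rtranclp_into_rtranclp[of R u v, OF Ruv])
          then show ?thesis by blast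
        next
          assume "R\<^sup>*\<^sup>* v y0"
          then have "R\<^sup>*\<^sup>* u y0" by (rule converse_rtranclp_into_rtranclp[of R u v, OF Ruv])
          then show ?thesis by blast
        qed
      qed
    qed
  qed
  have step2: "R\<^sup>*\<^sup>* x0 y0"
  proof (rule ccontr)
    assume ny: "\<not> R\<^sup>*\<^sup>* x0 y0"
    define H where "H = {w. R\<^sup>*\<^sup>* x0 w}"
    have x0V: "x0 \<in> vertices X" using adj_vertices[OF a0(1)] by blast
    have Hsub: "H \<subseteq> vertices X - {b}"
    proof
      fix w assume "w \<in> H"
      then have "R\<^sup>*\<^sup>* x0 w" unfolding H_def by simp
      then show "w \<in> vertices X - {b}"
      proof (induction rule: rtranclp_induct)
        case base then show ?case using x0V x0b by simp
      next
        case (step u v)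
        have "adj X u v" "v \<noteq> b" using RD[OF step.hyps(2)] by auto
        then show ?case using adj_vertices[of X u v] by simp
      qed
    qed
    have finH: "finite H" using finite_subset[OF Hsub] finite_vertices[OF sc] by simp
    have x0H: "x0 \<in> H" unfolding H_def by simp
    have y0H: "y0 \<notin> H" using ny unfolding H_def by simp
    have nbrH: "{z \<in> H. adj X w z} = {z. adj X w z} - {b}" if w: "w \<in> H" for w
    proof (rule equalityI)
      show "{z \<in> H. adj X w z} \<subseteq> {z. adj X w z} - {b}" using Hsub by blast
      show "{z. adj X w z} - {b} \<subseteq> {z \<in> H. adj X w z}"
      proof
        fix z assume z: "z \<in> {z. adj X w z} - {b}"
        have wb: "w \<noteq> b" using w Hsub by blast
        have Rwz: "R w z" using RI z wb by blast
        have "R\<^sup>*\<^sup>* x0 w" using w unfolding H_def by simp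
        then have "R\<^sup>*\<^sup>* x0 z" using Rwz by (rule rtranclp.rtrancl_into_rtrancl[of R x0 w z])
        then have "z \<in> H" unfolding H_def by simp
        then show "z \<in> {z \<in> H. adj X w z}" using z by blast
      qed
    qed
    have deg: "card {z. adj X w z} = 2" if "w \<in> H" for w
    proof -
      have "w \<in> vertices X" using that Hsub by blast
      then show ?thesis by (rule npm1_degree[OF npm])
    qed
    have c_other: "card {z \<in> H. adj X w z} = 2" if w: "w \<in> H - {x0}" for w
    proof -
      have "\<not> adj X w b" using nb w y0H by blast
      then have "{z. adj X w z} - {b} = {z. adj X w z}" by auto
      then show "card {z \<in> H. adj X w z} = 2" using nbrH[of w] deg[of w] w by simp
    qed
    have c_x0: "card {z \<in> H. adj X x0 z} = 1"
    proof -
      have "adj X x0 b" using adj_symI[OF a0(1)] .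
      then have "b \<in> {z. adj X x0 z}" by simp
      then have "card ({z. adj X x0 z} - {b}) = 2 - 1"
        using deg[OF x0H] finite_nbrs[OF sc] by (simp add: card_Diff_singleton)
      then show ?thesis using nbrH[OF x0H] by simp
    qed
    define P where "P = (SIGMA w:H. {z \<in> H. adj X w z})"
    have "card P = (\<Sum>w\<in>H. card {z \<in> H. adj X w z})"
      unfolding P_def using finH by (intro card_SigmaI) auto
    also have "\<dots> = card {z \<in> H. adj X x0 z} + (\<Sum>w\<in>H - {x0}. card {z \<in> H. adj X w z})"
      using finH x0H by (simp add: sum.remove)
    also have "(\<Sum>w\<in>H - {x0}. card {z \<in> H. adj X w z}) = (\<Sum>w\<in>H - {x0}. 2)"
      using c_other by (intro sum.cong) auto
    finally have cP: "card P = 1 + 2 * card (H - {x0})" using c_x0 by simp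
    have "finite P" unfolding P_def using finH by auto
    moreover have "\<forall>s t. (s,t) \<in> P \<longrightarrow> (t,s) \<in> P \<and> s \<noteq> t"
    proof (intro allI impI)
      fix s t assume "(s,t) \<in> P"
      then have st: "s \<in> H" "t \<in> H" "adj X s t" unfolding P_def by auto
      have "adj X t s" using adj_symI[OF st(3)] .
      moreover have "s \<noteq> t" using st unfolding adj_def by simp
      ultimately show "(t,s) \<in> P \<and> s \<noteq> t" unfolding P_def using st by simp
    qed
    ultimately have "even (card P)" by (rule even_sym_card)
    then show False using cP by simp
  qed
  have y0x0: "R\<^sup>*\<^sup>* y0 x0" using rtranclp_symp[of R, OF Rsym step2] .
  have xx: "R\<^sup>*\<^sup>* x x0"
  proof -
    have "R\<^sup>*\<^sup>* x x0 \<or> R\<^sup>*\<^sup>* x y0" using step1[OF x] .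
    then show ?thesis using y0x0 rtranclp_trans[of R x y0 x0] by blast
  qed
  have yx: "R\<^sup>*\<^sup>* y x0"
  proof -
    have "R\<^sup>*\<^sup>* y x0 \<or> R\<^sup>*\<^sup>* y y0" using step1[OF y] .
    then show ?thesis using y0x0 rtranclp_trans[of R y y0 x0] by blast
  qed
  have "R\<^sup>*\<^sup>* x0 y" using rtranclp_symp[of R, OF Rsym yx] .
  then have "R\<^sup>*\<^sup>* x y" using rtranclp_trans[OF xx] by blast
  then show ?thesis unfolding R_def .
qed

definition reach :: "'a set set \<Rightarrow> 'a set set \<Rightarrow> 'a \<Rightarrow> 'a \<Rightarrow> bool" where
  "reach M N u v \<longleftrightarrow> (\<exists>c. adj M u c \<and> c \<in> vertices M - vertices N \<and> (adj (simp_complement N M))\<^sup>*\<^sup>* c v)"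

definition cf :: "'a set set \<Rightarrow> 'a \<Rightarrow> 'a set" where
  "cf X v = {w \<in> vertices X. (adj X)\<^sup>*\<^sup>* v w}"

lemma components_cf: "components X = cf X ` vertices X"
  unfolding components_def cf_def by simp

lemma cf_eq: assumes "(adj X)\<^sup>*\<^sup>* a b" shows "cf X a = cf X b"
  unfolding cf_def using assms rtranclp_adj_sym by (meson rtranclp_trans)

lemma comp_bound: assumes sc: "simplicial_complex M" and u: "u \<in> vertices N"
  and r: "\<forall>v\<in>vertices M - vertices N. reach M N u v"
  and fS: "finite S"
  and nS: "\<And>c. adj M u c \<Longrightarrow> c \<in> vertices M - vertices N \<Longrightarrow> c \<in> S"
  shows "card (components (simp_complement N M)) \<le> card (cf (simp_complement N M) ` S)"
proof -
  let ?C = "simp_complement N M"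
  have "components ?C \<subseteq> cf ?C ` S"
  proof
    fix K assume "K \<in> components ?C"
    then obtain v where v: "v \<in> vertices ?C" "K = cf ?C v" unfolding components_cf by blast
    then have "v \<in> vertices M - vertices N" using vert_C[OF sc] by blast
    then obtain c where c: "adj M u c" "c \<in> vertices M - vertices N" "(adj ?C)\<^sup>*\<^sup>* c v"
      using r unfolding reach_def by blast
    then have "cf ?C c = K" using cf_eq v by metis
    then show "K \<in> cf ?C ` S" using nS c by blast
  qed
  then show ?thesis using fS by (simp add: card_mono)
qed

lemma comp_image_le: assumes fY: "finite (vertices Y)" and m: "\<And>s t. adj Y s t \<Longrightarrow> adj X s t"
  shows "card (cf X ` vertices Y) \<le> card (components Y)"
proof -
  let ?g = "\<lambda>K. cf X (SOME s. s \<in> K)"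
  have "cf X ` vertices Y \<subseteq> ?g ` components Y"
  proof
    fix K assume "K \<in> cf X ` vertices Y"
    then obtain s where s: "s \<in> vertices Y" "K = cf X s" by blast
    have sin: "s \<in> cf Y s" using s unfolding cf_def by simp
    then have "(SOME s'. s' \<in> cf Y s) \<in> cf Y s" by (rule someI)
    then have "(adj Y)\<^sup>*\<^sup>* s (SOME s'. s' \<in> cf Y s)" unfolding cf_def by simp
    then have "(adj X)\<^sup>*\<^sup>* s (SOME s'. s' \<in> cf Y s)" using m by (metis mono_rtranclp)
    then have "?g (cf Y s) = K" using cf_eq s by metis
    moreover have "cf Y s \<in> components Y" using s unfolding components_cf by blast
    ultimately show "K \<in> ?g ` components Y" by blast
  qed
  moreover have "finite (components Y)" using fY unfolding components_cf by simp
  ultimately show ?thesis by (meson card_image_le card_mono finite_imageI le_trans)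
qed

lemma adjCL_to_adjC: assumes sc: "simplicial_complex M" and ind: "induced_subcomplex N M" and p: "{p} \<in> N"
  and a: "adj (simp_complement (link N {p}) (link M {p})) s t"
  shows "adj (simp_complement N M) s t"
proof -
  have a1: "adj (link M {p}) s t" "s \<notin> vertices (link N {p})" "t \<notin> vertices (link N {p})"
    using a by (auto simp: adj_C)
  have "s \<in> vertices (link M {p})" "t \<in> vertices (link M {p})" using adj_vertices[OF a1(1)] by auto
  then have "s \<notin> vertices N" "t \<notin> vertices N" using link_vert_out[OF sc ind p] a1 by blast+
  then show ?thesis using link_adj[OF a1(1)] by (simp add: adj_C)
qed

lemma reach_step: assumes sc: "simplicial_complex M" and ind: "induced_subcomplex N M"
  and scN: "simplicial_complex N"
  and p: "p \<in> vertices N" and pq: "adj N p q" and r: "reach M N p v"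
  and IH: "\<forall>u\<in>vertices (link N {p}). \<forall>v\<in>vertices (link M {p}) - vertices (link N {p}). reach (link M {p}) (link N {p}) u v"
  shows "reach M N q v"
proof -
  have pN: "{p} \<in> N" using vertex_singleton[OF scN p] .
  obtain c1 where c1: "adj M p c1" "c1 \<in> vertices M - vertices N" "(adj (simp_complement N M))\<^sup>*\<^sup>* c1 v"
    using r unfolding reach_def by blast
  have "vertices (link N {p}) \<subseteq> vertices N" using link_sub unfolding vertices_def by blast
  then have c1L: "c1 \<in> vertices (link M {p}) - vertices (link N {p})"
    using link_vertex_of_adj[OF sc c1(1)] c1(2) by blast
  have "{q} \<in> link N {p}" using pq sc_sub[OF scN] unfolding adj_def by (auto simp: link_mem)
  then have qL: "q \<in> vertices (link N {p})" by (rule singleton_vertex)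
  obtain c' where c': "adj (link M {p}) q c'" "c' \<in> vertices (link M {p}) - vertices (link N {p})"
    "(adj (simp_complement (link N {p}) (link M {p})))\<^sup>*\<^sup>* c' c1"
    using IH qL c1L unfolding reach_def by blast
  have "(adj (simp_complement N M))\<^sup>*\<^sup>* c' c1"
    using c'(3) adjCL_to_adjC[OF sc ind pN] by (metis mono_rtranclp)
  then have "(adj (simp_complement N M))\<^sup>*\<^sup>* c' v" using c1(3) by (meson rtranclp_trans)
  moreover have "adj M q c'" using link_adj[OF c'(1)] .
  moreover have "c' \<in> vertices M - vertices N" using link_vert_out[OF sc ind pN c'(2)] .
  ultimately show ?thesis unfolding reach_def by blast
qed


lemma base_reach: assumes npm: "normal_pseudomanifold M 1" and a: "a \<in> vertices M" and b: "b \<in> vertices M"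
  and ab: "a \<noteq> b" and nab: "\<not> adj M a b" and VN: "vertices N = {a, b}"
  and v: "v \<in> vertices M - vertices N"
  shows "reach M N a v"
proof -
  let ?R = "\<lambda>s t. adj M s t \<and> s \<noteq> b \<and> t \<noteq> b"
  let ?C = "simp_complement N M"
  have aC: "\<And>s t. adj ?C s t \<longleftrightarrow> adj M s t \<and> s \<notin> {a,b} \<and> t \<notin> {a,b}" using VN by (simp add: adj_C)
  have "?R\<^sup>*\<^sup>* a v" using npm1_cut[OF npm b a _ _] ab v VN by blast
  moreover have "\<And>x. ?R\<^sup>*\<^sup>* x v \<Longrightarrow> x \<noteq> b \<Longrightarrow> (x = a \<longrightarrow> reach M N a v) \<and> (x \<noteq> a \<longrightarrow> (adj ?C)\<^sup>*\<^sup>* x v \<or> reach M N a v)"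
  proof -
    fix x assume "?R\<^sup>*\<^sup>* x v" "x \<noteq> b"
    then show "(x = a \<longrightarrow> reach M N a v) \<and> (x \<noteq> a \<longrightarrow> (adj ?C)\<^sup>*\<^sup>* x v \<or> reach M N a v)"
    proof (induction rule: converse_rtranclp_induct)
      case base then show ?case using v VN by auto
    next
      case (step x y)
      have ya: "y \<noteq> b" "adj M x y" using step by auto
      have IH: "(y = a \<longrightarrow> reach M N a v) \<and> (y \<noteq> a \<longrightarrow> (adj ?C)\<^sup>*\<^sup>* y v \<or> reach M N a v)"
        using step.IH ya by blast
      show ?case
      proof (cases "x = a")
        case True
        then have "y \<noteq> a" using ya unfolding adj_def by auto
        then have "(adj ?C)\<^sup>*\<^sup>* y v \<or> reach M N a v" using IH by blast
        moreover have "y \<in> vertices M - vertices N" using adj_vertices[OF ya(2)] ya(1) \<open>y \<noteq> a\<close> VN by simp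
        ultimately show ?thesis using True ya unfolding reach_def by blast
      next
        case False
        show ?thesis
        proof (cases "y = a")
          case True then show ?thesis using IH False by blast
        next
          case False
          then have "adj ?C x y" using aC ya \<open>x \<noteq> a\<close> step.prems by blast
          then show ?thesis using IH False \<open>x \<noteq> a\<close> by (meson converse_rtranclp_into_rtranclp)
        qed
      qed
    qed
  qed
  ultimately show ?thesis using ab by blast
qed

lemma rtranclp_path: "R\<^sup>*\<^sup>* x y \<Longrightarrow> \<exists>p. p \<noteq> [] \<and> hd p = x \<and> last p = y \<and> distinct p \<and>
   (\<forall>i. Suc i < length p \<longrightarrow> R (p!i) (p!Suc i)) \<and> (\<forall>z\<in>set p. z = x \<or> (\<exists>w. R w z))"
proof (induction rule: converse_rtranclp_induct)
  case base
  show ?case by (intro exI[of _ "[y]"]) auto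
next
  case (step x x')
  then obtain p where p: "p \<noteq> []" "hd p = x'" "last p = y" "distinct p"
     "\<forall>i. Suc i < length p \<longrightarrow> R (p!i) (p!Suc i)" "\<forall>z\<in>set p. z = x' \<or> (\<exists>w. R w z)"
    by blast
  show ?case
  proof (cases "x \<in> set p")
    case True
    then obtain i where i: "i < length p" "p ! i = x" by (metis in_set_conv_nth)
    let ?q = "drop i p"
    have "?q \<noteq> []" using i by simp
    moreover have "hd ?q = x" using i by (simp add: hd_drop_conv_nth)
    moreover have "last ?q = y" using i p by simp
    moreover have "distinct ?q" using p by simp
    moreover have "\<forall>j. Suc j < length ?q \<longrightarrow> R (?q!j) (?q!Suc j)"
    proof (intro allI impI)
      fix j assume "Suc j < length ?q"
      then have "Suc (i + j) < length p" by simp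
      then have "R (p!(i+j)) (p!Suc (i+j))" using p by blast
      then show "R (?q!j) (?q!Suc j)" using i by simp
    qed
    moreover have "\<forall>z\<in>set ?q. z = x \<or> (\<exists>w. R w z)" using p step.hyps(1) set_drop_subset by fastforce
    ultimately show ?thesis by blast
  next
    case False
    let ?q = "x # p"
    have "last ?q = y" using p by simp
    moreover have "distinct ?q" using p False by simp
    moreover have "\<forall>j. Suc j < length ?q \<longrightarrow> R (?q!j) (?q!Suc j)"
    proof (intro allI impI)
      fix j assume j: "Suc j < length ?q"
      show "R (?q!j) (?q!Suc j)"
      proof (cases j)
        case 0 then show ?thesis using p step.hyps(1) by (simp add: hd_conv_nth)
      next
        case (Suc k) then show ?thesis using p j by simp
      qed
    qed
    moreover have "\<forall>z\<in>set ?q. z = x \<or> (\<exists>w. R w z)" using p step.hyps(1) by auto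
    ultimately show ?thesis by (intro exI[of _ ?q]) simp
  qed
qed


lemma main: "normal_pseudomanifold M d \<Longrightarrow> induced_subcomplex N M \<Longrightarrow>
  (if d = 1 then (\<exists>a b. a \<noteq> b \<and> N = {{},{a},{b}}) else normal_pseudomanifold N (d - 1)) \<Longrightarrow>
  (\<forall>u\<in>vertices N. \<forall>v\<in>vertices M - vertices N. reach M N u v) \<and> card (components (simp_complement N M)) \<le> 2"
proof (induction d arbitrary: M N)
  case 0 then show ?case using npm_d by fastforce
next
  case (Suc k)
  have npm: "normal_pseudomanifold M (Suc k)" and ind: "induced_subcomplex N M" using Suc.prems by auto
  have sc: "simplicial_complex M" using npm by (rule npm_sc)
  have NM: "N \<subseteq> M" using ind by (rule induced_sub)
  have VNM: "vertices N \<subseteq> vertices M" using ind by (rule vert_N_sub)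
  show ?case
  proof (cases "k = 0")
    case True
    then have npm1: "normal_pseudomanifold M 1" using npm by simp
    obtain a b where ab: "a \<noteq> b" "N = {{},{a},{b}}" using Suc.prems(3) True by auto
    have VN: "vertices N = {a, b}" using ab unfolding vertices_def by auto
    have abM: "a \<in> vertices M" "b \<in> vertices M" using VN VNM by auto
    have nab: "\<not> adj M a b"
    proof
      assume "adj M a b"
      then have "{a,b} \<in> N" using induced_mem[OF ind] VN unfolding adj_def by blast
      then show False using ab by (auto simp: doubleton_eq_iff)
    qed
    have nba: "\<not> adj M b a" using nab adj_sym[of M b a] by simp
    have VN': "vertices N = {b, a}" using VN by auto
    have ra: "\<forall>u\<in>vertices N. \<forall>v\<in>vertices M - vertices N. reach M N u v"
      using base_reach[OF npm1 abM(1) abM(2) ab(1) nab VN] base_reach[OF npm1 abM(2) abM(1) _ nba VN'] ab(1) VN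
      by auto
    let ?S = "{z. adj M a z}"
    have "card (components (simp_complement N M)) \<le> card (cf (simp_complement N M) ` ?S)"
    proof (rule comp_bound[OF sc _ _ finite_nbrs[OF sc]])
      show "a \<in> vertices N" using VN by simp
      show "\<forall>v\<in>vertices M - vertices N. reach M N a v" using ra VN by simp
    qed simp
    also have "\<dots> \<le> card ?S" using finite_nbrs[OF sc] by (rule card_image_le)
    also have "\<dots> = 2" using npm1_degree[OF npm1 abM(1)] .
    finally show ?thesis using ra by blast
  next
    case False
    then have k1: "k \<ge> 1" by simp
    have npmN: "normal_pseudomanifold N k" using Suc.prems(3) False by simp
    have scN: "simplicial_complex N" using npmN by (rule npm_sc)
    let ?C = "simp_complement N M"
    have IHL: "(\<forall>u\<in>vertices (link N {p}). \<forall>v\<in>vertices (link M {p}) - vertices (link N {p}). reach (link M {p}) (link N {p}) u v)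
       \<and> card (components (simp_complement (link N {p}) (link M {p}))) \<le> 2" if p: "p \<in> vertices N" for p
    proof -
      have pN: "{p} \<in> N" using vertex_singleton[OF scN p] .
      have pM: "{p} \<in> M" using pN NM by blast
      have "normal_pseudomanifold (link M {p}) k" using link_npm[OF npm _ pM] k1 by simp
      moreover have "induced_subcomplex (link N {p}) (link M {p})" using link_induced[OF sc ind pN] .
      moreover have "if k = 1 then (\<exists>a b. a \<noteq> b \<and> link N {p} = {{},{a},{b}}) else normal_pseudomanifold (link N {p}) (k - 1)"
      proof (cases "k = 1")
        case True then show ?thesis using link_npm1[of N p] npmN pN by simp
      next
        case False then show ?thesis using link_npm[OF npmN _ pN] k1 by simp
      qed
      ultimately show ?thesis using Suc.IH by blast
    qed
    have ra: "\<forall>u\<in>vertices N. \<forall>v\<in>vertices M - vertices N. reach M N u v"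
    proof (intro ballI)
      fix u v assume u: "u \<in> vertices N" and v: "v \<in> vertices M - vertices N"
      obtain w where w: "w \<in> vertices N" using npm_vertex_ex[OF npmN] by blast
      have "(adj M)\<^sup>*\<^sup>* v w" using npm_connected[OF npm] v w VNM unfolding connected_cx_def by blast
      moreover have "\<And>x. (adj M)\<^sup>*\<^sup>* x w \<Longrightarrow> x \<in> vertices M - vertices N \<Longrightarrow> (adj ?C)\<^sup>*\<^sup>* x v \<Longrightarrow> \<exists>u0\<in>vertices N. reach M N u0 v"
      proof -
        fix x assume "(adj M)\<^sup>*\<^sup>* x w" "x \<in> vertices M - vertices N" "(adj ?C)\<^sup>*\<^sup>* x v"
        then show "\<exists>u0\<in>vertices N. reach M N u0 v"
        proof (induction rule: converse_rtranclp_induct)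
          case base then show ?case using w by blast
        next
          case (step x y)
          show ?case
          proof (cases "y \<in> vertices N")
            case True
            have "adj M y x" using adj_symI[OF step.hyps(1)] .
            then show ?thesis using True step.prems unfolding reach_def by blast
          next
            case False
            have yM: "y \<in> vertices M" using adj_vertices[OF step.hyps(1)] by blast
            have "adj ?C y x" unfolding adj_C using adj_symI[OF step.hyps(1)] step.prems(1) False by blast
            then have "(adj ?C)\<^sup>*\<^sup>* y v" using step.prems by (meson converse_rtranclp_into_rtranclp)
            then show ?thesis using step.IH yM False by blast
          qed
        qed
      qed
      ultimately obtain u0 where u0: "u0 \<in> vertices N" "reach M N u0 v" using v by blast
      have "(adj N)\<^sup>*\<^sup>* u0 u" using npm_connected[OF npmN] u0 u unfolding connected_cx_def by blast
      then show "reach M N u v"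
      proof (induction rule: rtranclp_induct)
        case base then show ?case using u0 by simp
      next
        case (step y z)
        have yN: "y \<in> vertices N" using adj_vertices[OF step.hyps(2)] by blast
        show ?case using reach_step[OF sc ind scN yN step.hyps(2) step.IH] IHL[OF yN] by blast
      qed
    qed
    obtain u where u: "u \<in> vertices N" using npm_vertex_ex[OF npmN] by blast
    have uN: "{u} \<in> N" using vertex_singleton[OF scN u] .
    let ?L = "link M {u}" and ?LN = "link N {u}"
    let ?CL = "simp_complement ?LN ?L"
    have scL: "simplicial_complex ?L" using sc by (rule sc_link)
    have VCL: "vertices ?CL = vertices ?L - vertices ?LN" using vert_C[OF scL] .
    have fin: "finite (vertices ?CL)" using VCL finite_vertices[OF scL] by simp
    have "card (components ?C) \<le> card (cf ?C ` vertices ?CL)"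
    proof (rule comp_bound[OF sc u _ fin])
      show "\<forall>v\<in>vertices M - vertices N. reach M N u v" using ra u by blast
      fix c assume c: "adj M u c" "c \<in> vertices M - vertices N"
      have "vertices ?LN \<subseteq> vertices N" using link_sub unfolding vertices_def by blast
      then show "c \<in> vertices ?CL" using VCL link_vertex_of_adj[OF sc c(1)] c(2) by blast
    qed
    also have "\<dots> \<le> card (components ?CL)"
      using comp_image_le[OF fin] adjCL_to_adjC[OF sc ind uN] by blast
    also have "\<dots> \<le> 2" using IHL[OF u] by blast
    finally show ?thesis using ra by blast
  qed
qed

theorem lemma3p3:
  fixes M N :: "'a set set" and d :: nat
  assumes "simplicial_complex M" and "pure_dim M d"
    and "simplicial_complex N" and "pure_dim N (d - 1)"
    and "induced_subcomplex N M"
    and "normal_pseudomanifold M d" and "normal_pseudomanifold N (d - 1)"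
  shows "(\<forall>u\<in>vertices N. \<forall>v\<in>vertices (simp_complement N M).
            \<exists>p. edge_path M p u v \<and> (\<forall>x\<in>set p. x \<in> vertices N \<longrightarrow> x = u))
         \<and> card (components (simp_complement N M)) \<le> 2"
proof -
  have "d \<noteq> 1" using npm_d[OF assms(7)] by auto
  then have m: "(\<forall>u\<in>vertices N. \<forall>v\<in>vertices M - vertices N. reach M N u v) \<and> card (components (simp_complement N M)) \<le> 2"
    using main[OF assms(6) assms(5)] assms(7) by simp
  have VC: "vertices (simp_complement N M) = vertices M - vertices N" using vert_C[OF assms(1)] .
  have VNM: "vertices N \<subseteq> vertices M" using assms(5) by (rule vert_N_sub)
  let ?C = "simp_complement N M"
  have "\<exists>p. edge_path M p u v \<and> (\<forall>x\<in>set p. x \<in> vertices N \<longrightarrow> x = u)"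
    if u: "u \<in> vertices N" and v: "v \<in> vertices ?C" for u v
  proof -
    obtain c where c: "adj M u c" "c \<in> vertices M - vertices N" "(adj ?C)\<^sup>*\<^sup>* c v"
      using m u v VC unfolding reach_def by blast
    obtain p where p: "p \<noteq> []" "hd p = c" "last p = v" "distinct p"
      "\<forall>i. Suc i < length p \<longrightarrow> adj ?C (p!i) (p!Suc i)" "\<forall>z\<in>set p. z = c \<or> (\<exists>w. adj ?C w z)"
      using rtranclp_path[OF c(3)] by blast
    have pC: "\<forall>z\<in>set p. z \<in> vertices M - vertices N"
      using p(6) c(2) adj_C adj_vertices by (metis Diff_iff)
    have "edge_path M (u # p) u v"
      unfolding edge_path_def
    proof (intro conjI allI impI)
      show "u # p \<noteq> []" "hd (u # p) = u" by simp_all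
      show "last (u # p) = v" using p by simp
      show "distinct (u # p)" using p pC u by auto
      show "set (u # p) \<subseteq> vertices M" using pC u VNM by auto
      fix i assume i: "Suc i < length (u # p)"
      show "adj M ((u # p) ! i) ((u # p) ! Suc i)"
      proof (cases i)
        case 0 then show ?thesis using c p by (simp add: hd_conv_nth)
      next
        case (Suc j)
        then have "Suc j < length p" using i by simp
        then have "adj ?C (p!j) (p!Suc j)" using p(5) by blast
        then show ?thesis using Suc by (simp add: adj_C)
      qed
    qed
    moreover have "\<forall>x\<in>set (u # p). x \<in> vertices N \<longrightarrow> x = u" using pC by auto
    ultimately show ?thesis by blast
  qed
  then show ?thesis using m by blast
qed

end
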